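(* Let $q$ be a power of $2$, $c\in\mathbb{F}_q^*$, and $f(X)=X(X^{q-1}-c)^{q+1}$ as a map $\mathbb{F}_{q^2}\to\mathbb{F}_{q^2}$. Let $\mathrm{Fix}(f)=\{\alpha\in\mathbb{F}_{q^2}:f(\alpha)=\alpha\}$. Then $|\mathrm{Fix}(f)|=2q-1$ if $\operatorname{Tr}(1/c)=1$, and $|\mathrm{Fix}(f)|=1$ if $\operatorname{Tr}(1/c)=0$.
   Context: $\operatorname{Tr}:\mathbb{F}_q\to\mathbb{F}_2$ denotes the absolute trace function. *)

theory Defs
  imports Main
begin

text \<open>Absolute trace from F_q to F_2, q = 2^m, with F_q viewed as a subfield of
  an ambient field of characteristic 2: Tr(x) = x + x^2 + x^4 + ... + x^(2^(m-1)).
  Its values lie in the prime field {0,1}.\<close>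
definition abs_trace :: "nat \<Rightarrow> 'a::field \<Rightarrow> 'a" where
  "abs_trace m x = (\<Sum>i<m. x ^ (2 ^ i))"

definition fmap :: "nat \<Rightarrow> 'a::field \<Rightarrow> 'a \<Rightarrow> 'a" where
  "fmap q c x = x * (x ^ (q - 1) - c) ^ (q + 1)"

end

theory Submission
  imports Defs "HOL-Computational_Algebra.Polynomial"
begin

lemma fermat_ff:
  fixes x :: "'a::{field,finite}"
  shows "x ^ card (UNIV::'a set) = x"
proof (cases "x = 0")
  case True then show ?thesis by (simp add: power_0_left)
next
  case False
  let ?A = "UNIV - {0::'a}"
  have fin: "finite ?A" by simp
  have inj: "inj_on (\<lambda>y. x * y) ?A" using False by (auto simp: inj_on_def)
  have img: "(\<lambda>y. x * y) ` ?A = ?A"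
  proof
    show "(\<lambda>y. x * y) ` ?A \<subseteq> ?A" using False by auto
    show "?A \<subseteq> (\<lambda>y. x * y) ` ?A"
    proof
      fix z assume z: "z \<in> ?A"
      have "z = x * (z / x)" using False by simp
      moreover have "z / x \<in> ?A" using z False by auto
      ultimately show "z \<in> (\<lambda>y. x * y) ` ?A" by blast
    qed
  qed
  have "prod (\<lambda>y. y) ?A = prod (\<lambda>y. y) ((\<lambda>y. x * y) ` ?A)" using img by simp
  also have "\<dots> = prod (\<lambda>y. x * y) ?A" using prod.reindex[OF inj] by simp
  also have "\<dots> = x ^ card ?A * prod (\<lambda>y. y) ?A" by (simp add: prod.distrib)
  finally have e: "prod (\<lambda>y. y) ?A = x ^ card ?A * prod (\<lambda>y. y) ?A" .
  have nz: "prod (\<lambda>y. y) ?A \<noteq> 0" using fin by (subst prod_zero_iff) auto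
  have "x ^ card ?A = 1" using e nz
    by (metis mult.commute mult_cancel_left1)
  moreover have "card (UNIV::'a set) = Suc (card ?A)"
  proof -
    have "card ?A = card (UNIV::'a set) - 1" by (simp add: card_Diff_singleton)
    moreover have "card (UNIV::'a set) > 0" by (simp add: finite_UNIV_card_ge_0)
    ultimately show ?thesis by simp
  qed
  ultimately show ?thesis by (metis power_Suc2 mult_1_left)
qed

lemma fiber_sum:
  assumes "finite A" "finite B" "h ` A \<subseteq> B"
  shows "card A = (\<Sum>b\<in>B. card {a\<in>A. h a = b})"
proof -
  have "A = (\<Union>b\<in>B. {a\<in>A. h a = b})" using assms(3) by auto
  hence "card A = card (\<Union>b\<in>B. {a\<in>A. h a = b})" by simp
  also have "\<dots> = (\<Sum>b\<in>B. card {a\<in>A. h a = b})"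
    using assms by (intro card_UN_disjoint) auto
  finally show ?thesis .
qed

lemma roots_pow_bound:
  fixes y :: "'a::field"
  assumes "n \<ge> 1"
  shows "card {x. x ^ n = y} \<le> n"
proof -
  define p where "p = monom (1::'a) n - [:y:]"
  have c: "coeff p n = 1" using assms by (cases n) (simp_all add: p_def coeff_monom)
  hence nz: "p \<noteq> 0" by auto
  have d: "degree p \<le> n" unfolding p_def
    by (intro degree_diff_le degree_monom_le) simp
  have "{x. x ^ n = y} = {x. poly p x = 0}" by (auto simp: p_def poly_monom)
  hence "card {x. x ^ n = y} = card {x. poly p x = 0}" by simp
  also have "\<dots> \<le> degree p" using card_poly_roots_bound[OF nz] .
  finally show ?thesis using d by simp
qed

lemma trace_roots_bound:
  assumes "k \<ge> 1"
  shows "card {x::'a::field. abs_trace k x = 0} \<le> 2 ^ (k - 1)"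
proof -
  define p where "p = (\<Sum>i<k. monom (1::'a) (2 ^ i))"
  have pe: "poly p x = abs_trace k x" for x
    by (simp add: p_def poly_sum poly_monom abs_trace_def)
  have "coeff p (2^(k-1)) = (\<Sum>i<k. if i = k - 1 then 1 else 0)"
    unfolding p_def coeff_sum coeff_monom
    by (intro sum.cong) auto
  also have "\<dots> = 1" using assms by simp
  finally have nz: "p \<noteq> 0" by auto
  have d: "degree p \<le> 2 ^ (k - 1)" unfolding p_def
  proof (intro degree_sum_le)
    fix i assume "i \<in> {..<k}"
    hence "(2::nat) ^ i \<le> 2 ^ (k - 1)" by (intro power_increasing) auto
    thus "degree (monom (1::'a) (2 ^ i)) \<le> 2 ^ (k - 1)"
      using degree_monom_le order_trans by blast
  qed simp
  have "card {x::'a. abs_trace k x = 0} = card {x. poly p x = 0}" by (simp add: pe)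
  also have "\<dots> \<le> degree p" using card_poly_roots_bound[OF nz] .
  finally show ?thesis using d by simp
qed

lemma char2_neg:
  assumes "(1::'a::comm_ring_1) + 1 = 0"
  shows "- x = (x::'a)"
proof -
  have "x + x = 0" using assms by (metis distrib_left mult_1_right mult_zero_right)
  thus ?thesis by (metis add_eq_0_iff)
qed

lemma char2_minus:
  assumes "(1::'a::comm_ring_1) + 1 = 0"
  shows "x - y = x + (y::'a)"
  using char2_neg[OF assms, of y] by (metis diff_conv_add_uminus)

lemma char2_double:
  assumes "(1::'a::comm_ring_1) + 1 = 0"
  shows "x + x = (0::'a)"
  using assms by (metis distrib_left mult_1_right mult_zero_right)

lemma frob:
  assumes "(1::'a::comm_ring_1) + 1 = 0"
  shows "(x + y) ^ (2 ^ k) = x ^ (2 ^ k) + (y::'a) ^ (2 ^ k)"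
proof (induction k)
  case 0 then show ?case by simp
next
  case (Suc k)
  have sq: "(a + b) ^ 2 = a ^ 2 + b ^ 2" for a b :: 'a
  proof -
    have "(a + b) ^ 2 = a ^ 2 + b ^ 2 + (a * b + a * b)" by (simp add: power2_eq_square algebra_simps)
    thus ?thesis using char2_double[OF assms] by simp
  qed
  have "(x + y) ^ (2 ^ Suc k) = ((x + y) ^ (2 ^ k)) ^ 2" by (simp add: power_mult[symmetric] mult.commute)
  also have "\<dots> = (x ^ (2 ^ k)) ^ 2 + (y ^ (2 ^ k)) ^ 2" using Suc sq by simp
  also have "\<dots> = x ^ (2 ^ Suc k) + y ^ (2 ^ Suc k)" by (simp add: power_mult[symmetric] mult.commute)
  finally show ?case .
qed

lemma tr_shift:
  fixes x :: "'a::field"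
  assumes "x ^ (2 ^ m) = x"
  shows "abs_trace m (x ^ 2) = abs_trace m x"
proof -
  have "abs_trace m (x ^ 2) = (\<Sum>i<m. x ^ (2 ^ Suc i))"
    unfolding abs_trace_def by (intro sum.cong) (auto simp: power_mult[symmetric] mult.commute)
  also have "\<dots> + x ^ (2 ^ 0) = (\<Sum>i<Suc m. x ^ (2 ^ i))"
    by (subst sum.lessThan_Suc_shift) simp
  also have "\<dots> = abs_trace m x + x ^ (2 ^ m)" by (simp add: abs_trace_def)
  finally show ?thesis using assms by simp
qed

lemma tr_art:
  fixes w :: "'a::field"
  assumes "(1::'a) + 1 = 0"
  shows "abs_trace m (w ^ 2 + w) = w ^ (2 ^ m) + w"
proof -
  have "abs_trace m (w ^ 2 + w) = (\<Sum>i<m. w ^ (2 ^ Suc i) - w ^ (2 ^ i))"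
    unfolding abs_trace_def
  proof (intro sum.cong refl)
    fix i
    have "(w ^ 2 + w) ^ 2 ^ i = (w^2) ^ 2 ^ i + w ^ 2 ^ i" by (rule frob[OF assms])
    also have "(w^2) ^ 2 ^ i = w ^ (2 ^ Suc i)" by (simp add: power_mult[symmetric] mult.commute)
    finally show "(w ^ 2 + w) ^ 2 ^ i = w ^ 2 ^ Suc i - w ^ 2 ^ i"
      by (simp add: char2_minus[OF assms])
  qed
  also have "\<dots> = w ^ (2 ^ m) - w" by (subst sum_lessThan_telescope) simp
  finally show ?thesis by (simp add: char2_minus[OF assms])
qed

lemma tr_add:
  fixes x :: "'a::field"
  shows "abs_trace (a + b) x = abs_trace a x + abs_trace b (x ^ (2 ^ a))"
proof (induction b)
  case 0 then show ?case by (simp add: abs_trace_def)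
next
  case (Suc b)
  have "abs_trace (a + Suc b) x = abs_trace (a + b) x + x ^ (2 ^ (a + b))"
    by (simp add: abs_trace_def)
  also have "x ^ (2 ^ (a + b)) = (x ^ (2 ^ a)) ^ (2 ^ b)"
    by (simp add: power_add power_mult)
  finally show ?case using Suc by (simp add: abs_trace_def)
qed

theorem mainTheorem7:
  fixes c :: "'a::{field,finite}" and q m :: nat
  assumes "q = 2 ^ m" and "m \<ge> 1"
    and "card (UNIV :: 'a set) = q ^ 2"
    and "c ^ q = c" and "c \<noteq> 0"
  shows "(abs_trace m (inverse c) = 1 \<longrightarrow> card {\<alpha>. fmap q c \<alpha> = \<alpha>} = 2 * q - 1)
       \<and> (abs_trace m (inverse c) = 0 \<longrightarrow> card {\<alpha>. fmap q c \<alpha> = \<alpha>} = 1)"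
proof -
  note qdef = assms(1) and m1 = assms(2) and cardU = assms(3) and cq = assms(4) and c0 = assms(5)
  have q2: "q \<ge> 2" using qdef m1
    by (metis one_le_numeral power_increasing power_one_right)
  have ferm: "x ^ (q ^ 2) = x" for x :: 'a using fermat_ff[of x] cardU by simp
  have ch: "(1::'a) + 1 = 0"
  proof -
    have "even (q ^ 2)" using qdef m1 by simp
    hence "(-1::'a) ^ (q ^ 2) = 1" by simp
    hence "(-1::'a) = 1" using ferm[of "-1"] by simp
    thus ?thesis by (metis add.right_inverse)
  qed
  have sub: "x - y = x + y" for x y :: 'a by (rule char2_minus[OF ch])
  have dbl: "x + x = 0" for x :: 'a by (rule char2_double[OF ch])
  have eq0: "x + y = 0 \<longleftrightarrow> x = y" for x y :: 'a
  proof -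
    have "x + y = 0 \<longleftrightarrow> x - y = 0" by (simp only: sub)
    thus ?thesis by (simp only: right_minus_eq)
  qed
  have frq: "(x + y) ^ q = x ^ q + y ^ q" for x y :: 'a using frob[OF ch] qdef by simp
  have qpos: "q > 0" using q2 by simp
  have unit: "(a ^ (q - 1)) ^ (q + 1) = 1" if "a \<noteq> 0" for a :: 'a
  proof -
    have e: "(q - 1) * (q + 1) = q ^ 2 - 1" using q2 by (simp add: power2_eq_square algebra_simps)
    have "a ^ (q ^ 2 - 1) * a = a ^ (q ^ 2)"
      by (metis One_nat_def Suc_pred pos2 power_Suc2 qpos zero_less_power)
    hence "a ^ (q ^ 2 - 1) * a = 1 * a" using ferm[of a] by simp
    hence "a ^ (q ^ 2 - 1) = 1" using that by (metis mult_cancel_right)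
    thus ?thesis using e by (simp only: power_mult[symmetric])
  qed
  define P where "P = (\<lambda>y::'a. y ^ 2 + c * y + 1 = 0)"
  have key: "fmap q c a = a \<longleftrightarrow> P (a ^ (q - 1))" if an: "a \<noteq> 0" for a :: 'a
  proof -
    define y where "y = a ^ (q - 1)"
    have yu: "y * y ^ q = 1" using unit[OF an] unfolding y_def by (simp add: mult.commute)
    have yn: "y \<noteq> 0" using yu by auto
    have "fmap q c a = a \<longleftrightarrow> (y - c) ^ (q + 1) = 1"
      unfolding fmap_def y_def using an by (metis mult_cancel_left1)
    also have "(y - c) ^ (q + 1) = (y ^ q + c) * (y + c)"
      using frq[of y c] cq by (simp add: sub)
    also have "(y ^ q + c) * (y + c) = 1 \<longleftrightarrow> y * ((y ^ q + c) * (y + c)) = y * 1"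
      using yn by simp
    also have "y * ((y ^ q + c) * (y + c)) = (y * y ^ q + c * y) * (y + c)"
      by (simp add: algebra_simps)
    also have "\<dots> = y + c * (y ^ 2 + c * y + 1)" using yu
      by (simp add: algebra_simps power2_eq_square)
    also have "y + c * (y ^ 2 + c * y + 1) = y * 1 \<longleftrightarrow> P y"
      using c0 by (simp add: P_def)
    finally show ?thesis unfolding y_def .
  qed
  have trw: "abs_trace m (inverse c) = (y / c) ^ q + y / c" if "P y" for y
  proof -
    have ic: "(inverse c) ^ (2 ^ m) = inverse c" using cq qdef by (simp add: power_inverse)
    have "(y / c) ^ 2 + y / c = (y ^ 2 + c * y) / c ^ 2" using c0
      by (simp add: field_simps power2_eq_square)
    also have "y ^ 2 + c * y = 1" using that unfolding P_def
      by (metis add_eq_0_iff char2_neg[OF ch])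
    finally have "(y / c) ^ 2 + y / c = (inverse c) ^ 2" by (simp add: power_inverse field_simps)
    hence "abs_trace m (inverse c) = abs_trace m ((y / c) ^ 2 + y / c)"
      using tr_shift[OF ic] by simp
    also have "\<dots> = (y / c) ^ q + y / c" using tr_art[OF ch] qdef by simp
    finally show ?thesis .
  qed
  have fixset: "{a. fmap q c a = a} = insert 0 {a. a \<noteq> 0 \<and> P (a ^ (q - 1))}"
    using key by (auto simp: fmap_def)
  show ?thesis
  proof (intro conjI impI)
    assume t0: "abs_trace m (inverse c) = 0"
    have "{a. a \<noteq> 0 \<and> P (a ^ (q - 1))} = {}"
    proof (rule ccontr)
      assume "{a. a \<noteq> 0 \<and> P (a ^ (q - 1))} \<noteq> {}"
      then obtain a where an: "a \<noteq> 0" and Pa: "P (a ^ (q - 1))" by auto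
      define y where "y = a ^ (q - 1)"
      have yu: "y * y ^ q = 1" using unit[OF an] unfolding y_def by (simp add: mult.commute)
      have Py: "y ^ 2 + c * y + 1 = 0" using Pa unfolding P_def y_def .
      have "y ^ q * (y ^ 2 + c * y + 1) = y + c + y ^ q" using yu
        by (simp add: algebra_simps power2_eq_square)
      hence "y + c + y ^ q = 0" using Py by simp
      hence yy: "y ^ q + y = c" by (metis add.commute add_eq_0_iff char2_neg[OF ch] add.left_commute)
      have "abs_trace m (inverse c) = (y / c) ^ q + y / c" using trw Pa unfolding y_def by blast
      also have "\<dots> = (y ^ q + y) / c" using cq by (simp add: power_divide add_divide_distrib)
      also have "\<dots> = 1" using yy c0 by simp
      finally show False using t0 by simp
    qed
    thus "card {a. fmap q c a = a} = 1" using fixset by simp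
  next
    assume t1: "abs_trace m (inverse c) = 1"
    define x0 where "x0 = (inverse c) ^ 2"
    have x0q: "x0 ^ (2 ^ m) = x0"
    proof -
      have "x0 ^ (2 ^ m) = (inverse c ^ (2 ^ m)) ^ 2" unfolding x0_def
        by (simp only: power_mult[symmetric] mult.commute)
      also have "inverse c ^ (2 ^ m) = inverse c" using cq qdef by (simp add: power_inverse)
      finally show ?thesis unfolding x0_def .
    qed
    have qq: "(2::nat) ^ (2 * m) = q ^ 2" using qdef by (simp add: power_mult[symmetric] mult.commute)
    have tx0: "abs_trace (2 * m) x0 = 0"
    proof -
      have "abs_trace (2 * m) x0 = abs_trace m x0 + abs_trace m (x0 ^ (2 ^ m))"
        using tr_add[of m m x0] by (simp only: mult_2)
      also have "\<dots> = abs_trace m x0 + abs_trace m x0" using x0q by simp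
      also have "\<dots> = 0" by (rule dbl)
      finally show ?thesis .
    qed
    define g where "g = (\<lambda>w::'a. w ^ 2 + w)"
    define R where "R = {x::'a. abs_trace (2 * m) x = 0}"
    have gR: "range g \<subseteq> R"
    proof
      fix x assume "x \<in> range g"
      then obtain w where "x = g w" by auto
      hence "abs_trace (2 * m) x = w ^ (q ^ 2) + w" using tr_art[OF ch, of "2*m" w] qq
        by (simp add: g_def)
      thus "x \<in> R" using ferm[of w] dbl unfolding R_def by simp
    qed
    have cR: "card R \<le> 2 ^ (2 * m - 1)" unfolding R_def using m1
      by (intro trace_roots_bound) simp
    have fib: "{a \<in> UNIV. g a = g a0} = {a0, a0 + 1}" for a0
    proof -
      have "g a = g a0 \<longleftrightarrow> a = a0 \<or> a = a0 + 1" for a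
      proof -
        have "(a + a0) * (a + a0 + 1) = g a + g a0 + (1 + 1) * (a * a0)"
          by (simp add: g_def algebra_simps power2_eq_square)
        hence pr: "(a + a0) * (a + a0 + 1) = g a + g a0" using ch by simp
        have "g a = g a0 \<longleftrightarrow> g a + g a0 = 0" by (simp only: eq0)
        also have "\<dots> \<longleftrightarrow> a + a0 = 0 \<or> a + a0 + 1 = 0" by (simp only: pr[symmetric] mult_eq_0_iff)
        also have "a + a0 = 0 \<longleftrightarrow> a = a0" by (rule eq0)
        also have "a + a0 + 1 = 0 \<longleftrightarrow> a = a0 + 1" using eq0[of a "a0 + 1"] by (simp only: add.assoc)
        finally show ?thesis .
      qed
      thus ?thesis by auto
    qed
    have "card (UNIV::'a set) = (\<Sum>b\<in>range g. card {a \<in> UNIV. g a = b})"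
      by (intro fiber_sum) auto
    also have "\<dots> = (\<Sum>b\<in>range g. 2)"
    proof (intro sum.cong refl)
      fix b assume "b \<in> range g"
      then obtain a0 where "b = g a0" by auto
      thus "card {a \<in> UNIV. g a = b} = 2" using fib[of a0] by simp
    qed
    also have "\<dots> = 2 * card (range g)" by simp
    finally have e1: "2 * card (range g) = q ^ 2" using cardU by simp
    have "(2::nat) ^ (2 * m) = 2 ^ Suc (2 * m - 1)" using m1 by simp
    hence "(2::nat) ^ (2 * m) = 2 * 2 ^ (2 * m - 1)" by (simp only: power_Suc)
    hence "2 * card (range g) = 2 * 2 ^ (2 * m - 1)" using e1 qq by simp
    hence crg: "card (range g) = 2 ^ (2 * m - 1)" by simp
    have "range g = R" using gR cR crg by (intro card_seteq) auto
    hence "x0 \<in> range g" using tx0 unfolding R_def by auto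
    then obtain w where w: "w ^ 2 + w = x0" unfolding g_def by auto
    define r where "r = c * w"
    have Pr0: "r ^ 2 + c * r = 1"
    proof -
      have "r ^ 2 + c * r = c ^ 2 * (w ^ 2 + w)" by (simp add: r_def algebra_simps power2_eq_square)
      thus ?thesis using w c0 by (simp add: x0_def power_inverse)
    qed
    have Pr: "P r" using Pr0 ch by (simp add: P_def)
    have rr: "r * (r + c) = 1" using Pr0 by (simp add: algebra_simps power2_eq_square)
    have Prc: "P (r + c)"
    proof -
      have e: "(r + c) ^ 2 + c * (r + c) + 1 = (r ^ 2 + c * r + 1) + (1 + 1) * (r * c + c ^ 2)"
        by (simp add: algebra_simps power2_eq_square)
      have h1: "(1 + 1) * (r * c + c ^ 2) = (0::'a)" by (simp only: ch mult_zero_left)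
      have h2: "r ^ 2 + c * r + 1 = 0" using Pr unfolding P_def .
      show ?thesis unfolding P_def e h1 h2 by simp
    qed
    have roots: "y = r \<or> y = r + c" if "P y" for y
    proof -
      have e: "(y - r) * (y - (r + c)) = (y ^ 2 + c * y + 1) - (1 + 1) * (r * y + c * y + 1) + (r ^ 2 + c * r + 1)"
        by (simp add: algebra_simps power2_eq_square)
      have h1: "(1 + 1) * (r * y + c * y + 1) = (0::'a)" by (simp only: ch mult_zero_left)
      have h2: "r ^ 2 + c * r + 1 = 0" using Pr unfolding P_def .
      have h3: "y ^ 2 + c * y + 1 = 0" using that unfolding P_def .
      have "(y - r) * (y - (r + c)) = 0" unfolding e h1 h2 h3 by simp
      thus ?thesis by simp
    qed
    have Prq: "P (r ^ q)"
    proof -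
      have "(r ^ 2 + c * r + 1) ^ q = (r ^ q) ^ 2 + c * r ^ q + 1"
        using frq cq by (simp add: power_mult_distrib power_mult[symmetric] mult.commute)
      thus ?thesis using Pr qpos by (simp add: P_def power_0_left)
    qed
    have rq: "r ^ q = r + c"
    proof -
      have "r ^ q \<noteq> r"
      proof
        assume "r ^ q = r"
        hence "abs_trace m (inverse c) = r / c + r / c" using trw[OF Pr] cq
          by (simp add: power_divide)
        thus False using t1 dbl by simp
      qed
      thus ?thesis using roots[OF Prq] by blast
    qed
    have ur: "r ^ (q + 1) = 1" using rq rr by (simp add: mult.commute)
    have urc: "(r + c) ^ (q + 1) = 1"
    proof -
      have "(r + c) ^ (q + 1) = (r ^ q + c) * (r + c)" using frq cq by simp
      also have "\<dots> = r * (r + c)" using rq dbl by (simp add: add.assoc)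
      finally show ?thesis using rr by simp
    qed
    define F where "F = (\<lambda>y::'a. {a. a \<noteq> 0 \<and> a ^ (q - 1) = y})"
    have Fle: "card (F y) \<le> q - 1" for y
    proof -
      have "card (F y) \<le> card {x. x ^ (q - 1) = y}" unfolding F_def by (intro card_mono) auto
      also have "\<dots> \<le> q - 1" using q2 by (intro roots_pow_bound) simp
      finally show ?thesis .
    qed
    have Feq: "card (F y0) = q - 1" if y0: "y0 ^ (q + 1) = 1" for y0
    proof -
      define U where "U = {y::'a. y ^ (q + 1) = 1}"
      have cU: "card U \<le> q + 1" unfolding U_def by (intro roots_pow_bound) simp
      have y0U: "y0 \<in> U" using y0 by (simp add: U_def)
      have "card (UNIV - {0::'a}) = (\<Sum>y\<in>U. card {a \<in> UNIV - {0}. a ^ (q - 1) = y})"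
      proof (rule fiber_sum)
        show "(\<lambda>a. a ^ (q - 1)) ` (UNIV - {0::'a}) \<subseteq> U" unfolding U_def using unit by blast
      qed auto
      also have "\<dots> = (\<Sum>y\<in>U. card (F y))" by (intro sum.cong) (auto simp: F_def)
      also have "\<dots> = card (F y0) + (\<Sum>y\<in>U - {y0}. card (F y))"
        using y0U by (simp add: sum.remove)
      also have "(\<Sum>y\<in>U - {y0}. card (F y)) \<le> card (U - {y0}) * (q - 1)"
        using sum_bounded_above[of "U - {y0}" "\<lambda>y. card (F y)" "q - 1"] Fle by simp
      finally have A: "card (UNIV - {0::'a}) \<le> card (F y0) + card (U - {y0}) * (q - 1)" by simp
      have B: "card (U - {y0}) \<le> q" using cU y0U by (simp add: card_Diff_singleton)
      have C: "card (UNIV - {0::'a}) = q * q - 1" using cardU by (simp add: card_Diff_singleton power2_eq_square)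
      have "card (U - {y0}) * (q - 1) \<le> q * (q - 1)" using B by (intro mult_right_mono) auto
      hence "q * q - 1 \<le> card (F y0) + q * (q - 1)" using A C by linarith
      moreover have "q * q - 1 = q * (q - 1) + (q - 1)" using q2
        by (cases q) (simp_all add: algebra_simps)
      ultimately have "q - 1 \<le> card (F y0)" by linarith
      thus ?thesis using Fle[of y0] by simp
    qed
    have "{a. a \<noteq> 0 \<and> P (a ^ (q - 1))} = F r \<union> F (r + c)"
      unfolding F_def using roots Pr Prc by auto
    hence fs: "{a. fmap q c a = a} = insert 0 (F r \<union> F (r + c))" using fixset by simp
    have disj: "F r \<inter> F (r + c) = {}" using c0 unfolding F_def by auto
    have "card {a. fmap q c a = a} = Suc (card (F r \<union> F (r + c)))"
      unfolding fs by (subst card_insert_disjoint) (auto simp: F_def)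
    also have "card (F r \<union> F (r + c)) = card (F r) + card (F (r + c))"
      using disj by (intro card_Un_disjoint) auto
    also have "\<dots> = (q - 1) + (q - 1)" using Feq ur urc by simp
    finally show "card {a. fmap q c a = a} = 2 * q - 1" using q2 by simp
  qed
qed

end
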